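(* Let $f=p/q$ be a rational function, $p,q$ of degree $l$, positive on the standard simplex $\Delta$, with $b_\alpha(q,j,\Delta)>0$ for all $|\alpha|=j$, $j\ge l$, and with $p$ positive on $\Delta$; let $\underline p=\min_\Delta p$. If \[ k>\frac{l(l-1)}{2}\,\frac{\max_{|\alpha|=l}|b_\alpha(p,l,\Delta)|}{\underline p}, \] then $f$ satisfies the global certificate of positivity $\mathrm{Cert}(b(f,k,\Delta))$: $b_\alpha(f,k,\Delta)\ge0$ for all $|\alpha|=k$ and $b_{k\hat e_i}(f,k,\Delta)>0$ for $i=0,\dots,n$.
   Context: $\Delta$ is the standard simplex in $\mathbb{R}^n$ with barycentric coordinates $\lambda=(1-\sum x_i,x_1,\dots,x_n)$; $B^{(k)}_\alpha=\frac{k!}{\alpha_0!\cdots\alpha_n!}\lambda^\alpha$ ($\alpha\in\mathbb{N}^{n+1}$, $|\alpha|=k$); $b_\alpha(p,k,\Delta)$ are the Bernstein coefficients of $p$ of degree $k$; $b_\alpha(f,k,\Delta)=b_\alpha(p,k,\Delta)/b_\alpha(q,k,\Delta)$; $\hat e_i$ unit vectors of $\mathbb{R}^{n+1}$. *)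

theory Defs
  imports Complex_Main
begin

text \<open>Points of R^n are functions nat => real; only coordinates 1..n matter.
  Multi-indices in N^(n+1) are functions nat => nat supported in {0..n}.
  A polynomial in x_1..x_n is given by its monomial coefficients
  c :: (nat => nat) => real (exponent vector beta supported in {1..n}).\<close>

type_synonym mpoly = "(nat \<Rightarrow> nat) \<Rightarrow> real"

definition is_poly_deg :: "nat \<Rightarrow> nat \<Rightarrow> mpoly \<Rightarrow> bool" where
  "is_poly_deg n l c \<longleftrightarrow> finite {\<beta>. c \<beta> \<noteq> 0} \<and>
     (\<forall>\<beta>. c \<beta> \<noteq> 0 \<longrightarrow> (\<forall>i. i \<notin> {1..n} \<longrightarrow> \<beta> i = 0) \<and> (\<Sum>i=1..n. \<beta> i) \<le> l)"

definition peval :: "nat \<Rightarrow> mpoly \<Rightarrow> (nat \<Rightarrow> real) \<Rightarrow> real" where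
  "peval n c x = (\<Sum>\<beta>\<in>{\<beta>. c \<beta> \<noteq> 0}. c \<beta> * (\<Prod>i=1..n. x i ^ \<beta> i))"

definition std_simplex :: "nat \<Rightarrow> (nat \<Rightarrow> real) set" where
  "std_simplex n = {x. (\<forall>i\<in>{1..n}. 0 \<le> x i) \<and> (\<Sum>i=1..n. x i) \<le> 1 \<and>
                        (\<forall>i. i \<notin> {1..n} \<longrightarrow> x i = 0)}"

definition bary :: "nat \<Rightarrow> (nat \<Rightarrow> real) \<Rightarrow> nat \<Rightarrow> real" where
  "bary n x i = (if i = 0 then 1 - (\<Sum>j=1..n. x j) else x i)"

definition multi_idx :: "nat \<Rightarrow> nat \<Rightarrow> (nat \<Rightarrow> nat) set" where
  "multi_idx n k = {\<alpha>. (\<forall>i>n. \<alpha> i = 0) \<and> (\<Sum>i\<le>n. \<alpha> i) = k}"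

definition bernstein :: "nat \<Rightarrow> nat \<Rightarrow> (nat \<Rightarrow> nat) \<Rightarrow> (nat \<Rightarrow> real) \<Rightarrow> real" where
  "bernstein n k \<alpha> x = fact k / (\<Prod>i\<le>n. fact (\<alpha> i)) * (\<Prod>i\<le>n. bary n x i ^ \<alpha> i)"

definition bern_coeff :: "nat \<Rightarrow> mpoly \<Rightarrow> nat \<Rightarrow> (nat \<Rightarrow> nat) \<Rightarrow> real" where
  "bern_coeff n c k = (THE b. (\<forall>\<alpha>. \<alpha> \<notin> multi_idx n k \<longrightarrow> b \<alpha> = 0) \<and>
      (\<forall>x. peval n c x = (\<Sum>\<alpha>\<in>multi_idx n k. b \<alpha> * bernstein n k \<alpha> x)))"

definition vtx :: "nat \<Rightarrow> nat \<Rightarrow> nat \<Rightarrow> nat" where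
  "vtx k i = (\<lambda>j. if j = i then k else 0)"

end

theory Submission
  imports Defs "HOL-Analysis.Analysis"
begin


lemma simplex_eq: "std_simplex n = (PiE UNIV (\<lambda>i. if i \<in> {1..n} then {0..1} else {0})) \<inter> {x. (\<Sum>i=1..n. x i) \<le> 1}"
proof -
  have "x i \<le> 1" if "\<forall>i\<in>{1..n}. 0 \<le> x i" "(\<Sum>i=1..n. x i) \<le> 1" "i \<in> {1..n}" for x :: "nat \<Rightarrow> real" and i
  proof -
    have "x i \<le> (\<Sum>i=1..n. x i)"
      using that by (intro member_le_sum) auto
    thus ?thesis using that by simp
  qed
  thus ?thesis unfolding std_simplex_def by (auto simp: PiE_iff split: if_splits)
qed

lemma compact_simplex: "compact (std_simplex n)"
proof -
  have "compactin (product_topology (\<lambda>i. euclidean) UNIV) (PiE UNIV (\<lambda>i. if i \<in> {1..n} then {0..1::real} else {0}))"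
    by (subst compactin_PiE) auto
  hence c: "compact (PiE UNIV (\<lambda>i. if i \<in> {1..n} then {0..1::real} else {0}))"
    by (simp add: euclidean_product_topology)
  have "closed {x::nat\<Rightarrow>real. (\<Sum>i=1..n. x i) \<le> 1}"
    by (intro closed_Collect_le continuous_intros continuous_on_sum) auto
  with c show ?thesis unfolding simplex_eq by blast
qed

lemma peval_cont: "continuous_on S (peval n c)"
  unfolding peval_def[abs_def]
  by (intro continuous_intros continuous_on_sum continuous_on_prod continuous_on_power
       continuous_on_mult continuous_on_const)
     (auto intro: continuous_on_subset[OF continuous_on_product_coordinates])

lemma zero_in_simplex: "(\<lambda>_. 0) \<in> std_simplex n"
  unfolding std_simplex_def by auto



lemma finite_multi_idx: "finite (multi_idx n k)"
proof -
  have "multi_idx n k \<subseteq> {f. \<forall>x. (x \<in> {..n} \<longrightarrow> f x \<in> {..k}) \<and> (x \<notin> {..n} \<longrightarrow> f x = 0)}"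
  proof (clarsimp simp: multi_idx_def)
    fix f :: "nat \<Rightarrow> nat" and x assume h: "\<forall>i>n. f i = 0" "x \<le> n"
    have "f x \<le> (\<Sum>i\<le>n. f i)" using h by (intro member_le_sum) auto
    thus "f x \<le> (\<Sum>i\<le>n. f i)" .
  qed
  thus ?thesis by (rule finite_subset) (rule finite_set_of_finite_funs; auto)
qed

lemma multi_idx_le: "\<alpha> \<in> multi_idx n k \<Longrightarrow> \<alpha> i \<le> k"
proof (cases "i \<le> n")
  case True assume "\<alpha> \<in> multi_idx n k"
  hence "\<alpha> i \<le> (\<Sum>i\<le>n. \<alpha> i)" "(\<Sum>i\<le>n. \<alpha> i) = k" using True
    by (auto simp: multi_idx_def intro!: member_le_sum)
  thus ?thesis by simp
next
  case False assume "\<alpha> \<in> multi_idx n k" thus ?thesis using False by (auto simp: multi_idx_def)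
qed

lemma multi_idx_0: "multi_idx n 0 = {\<lambda>_. 0}"
  unfolding multi_idx_def by (auto simp: fun_eq_iff) (metis atMost_iff not_le)

lemma shift_sum:
  assumes "\<alpha> \<in> multi_idx n a"
  shows "(\<Sum>\<gamma>\<in>multi_idx n m. g (\<lambda>i. \<alpha> i + \<gamma> i)) = (\<Sum>\<beta>\<in>{\<beta>\<in>multi_idx n (a+m). \<forall>i. \<alpha> i \<le> \<beta> i}. g \<beta>)"
proof (rule sum.reindex_bij_witness[where i = "\<lambda>\<beta>. \<lambda>i. \<beta> i - \<alpha> i" and j = "\<lambda>\<gamma>. \<lambda>i. \<alpha> i + \<gamma> i"])
  fix \<gamma> assume "\<gamma> \<in> multi_idx n m"
  thus "(\<lambda>i. \<alpha> i + \<gamma> i - \<alpha> i) = \<gamma>" by auto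
  show "(\<lambda>i. \<alpha> i + \<gamma> i) \<in> {\<beta>\<in>multi_idx n (a+m). \<forall>i. \<alpha> i \<le> \<beta> i}"
    using assms \<open>\<gamma> \<in> multi_idx n m\<close> by (auto simp: multi_idx_def sum.distrib)
  show "g (\<lambda>i. \<alpha> i + \<gamma> i) = g (\<lambda>i. \<alpha> i + \<gamma> i)" ..
next
  fix \<beta> assume b: "\<beta> \<in> {\<beta>\<in>multi_idx n (a+m). \<forall>i. \<alpha> i \<le> \<beta> i}"
  thus "(\<lambda>i. \<alpha> i + (\<beta> i - \<alpha> i)) = \<beta>" by auto
  have "(\<Sum>i\<le>n. \<beta> i - \<alpha> i) = (\<Sum>i\<le>n. \<beta> i) - (\<Sum>i\<le>n. \<alpha> i)"
    using b by (intro sum_subtractf_nat) auto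
  thus "(\<lambda>i. \<beta> i - \<alpha> i) \<in> multi_idx n m"
    using b assms by (auto simp: multi_idx_def)
qed

definition mterm :: "nat \<Rightarrow> (nat \<Rightarrow> real) \<Rightarrow> (nat \<Rightarrow> nat) \<Rightarrow> real" where
  "mterm n y \<gamma> = (\<Prod>i\<le>n. y i ^ \<gamma> i / fact (\<gamma> i))"

lemma vtx_multi: "j \<le> n \<Longrightarrow> vtx k j \<in> multi_idx n k"
  unfolding multi_idx_def vtx_def by (auto simp: sum.delta)

lemma mterm_step:
  assumes "j \<le> n"
  shows "mterm n y \<gamma> * y j = mterm n y (\<lambda>i. vtx 1 j i + \<gamma> i) * (real (\<gamma> j) + 1)"
proof -
  have r: "(\<Prod>i\<in>{..n}-{j}. y i ^ (vtx 1 j i + \<gamma> i) / fact (vtx 1 j i + \<gamma> i))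
        = (\<Prod>i\<in>{..n}-{j}. y i ^ \<gamma> i / fact (\<gamma> i))"
    by (intro prod.cong) (auto simp: vtx_def)
  have "mterm n y \<gamma> = y j ^ \<gamma> j / fact (\<gamma> j) * (\<Prod>i\<in>{..n}-{j}. y i ^ \<gamma> i / fact (\<gamma> i))"
    unfolding mterm_def using assms by (subst prod.remove[of _ j]) auto
  moreover have "mterm n y (\<lambda>i. vtx 1 j i + \<gamma> i) = y j ^ Suc (\<gamma> j) / fact (Suc (\<gamma> j)) * (\<Prod>i\<in>{..n}-{j}. y i ^ \<gamma> i / fact (\<gamma> i))"
    unfolding mterm_def using assms r by (subst prod.remove[of _ j]) (auto simp: vtx_def)
  moreover have "a ^ g / fact g * R * a = a ^ Suc g / fact (Suc g) * R * (real g + 1)"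
    for a R :: real and g :: nat
  proof -
    have e: "fact (Suc g) = (real g + 1) * (fact g :: real)" by (simp add: fact_Suc)
    have "f > 0 \<Longrightarrow> a ^ g / f * R * a = a ^ Suc g / ((real g + 1) * f) * R * (real g + 1)" for f :: real
    proof -
      assume "f > 0"
      moreover have "real g + 1 > 0" by simp
      ultimately show ?thesis by simp
    qed
    thus ?thesis unfolding e by simp
  qed
  ultimately show ?thesis by simp
qed

lemma multinomial:
  "(\<Sum>\<gamma>\<in>multi_idx n m. mterm n y \<gamma>) = (\<Sum>i\<le>n. y i) ^ m / fact m"
proof (induction m)
  case 0 thus ?case by (simp add: multi_idx_0 mterm_def)
next
  case (Suc m)
  have "(\<Sum>i\<le>n. y i) ^ Suc m / fact (Suc m) = ((\<Sum>i\<le>n. y i) ^ m / fact m) * (\<Sum>j\<le>n. y j) / (real m + 1)"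
    by (simp add: fact_Suc field_simps)
  also have "\<dots> = (\<Sum>j\<le>n. \<Sum>\<gamma>\<in>multi_idx n m. mterm n y \<gamma> * y j / (real m + 1))"
    by (simp add: Suc.IH[symmetric] sum_distrib_left sum_distrib_right sum_divide_distrib)
  also have "\<dots> = (\<Sum>j\<le>n. \<Sum>\<beta>\<in>multi_idx n (Suc m). mterm n y \<beta> * real (\<beta> j) / (real m + 1))"
  proof (rule sum.cong[OF refl])
    fix j assume j: "j \<in> {..n}"
    have "(\<Sum>\<gamma>\<in>multi_idx n m. mterm n y \<gamma> * y j / (real m + 1))
       = (\<Sum>\<gamma>\<in>multi_idx n m. (\<lambda>\<beta>. mterm n y \<beta> * real (\<beta> j) / (real m + 1)) (\<lambda>i. vtx 1 j i + \<gamma> i))"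
      using j by (intro sum.cong refl) (simp add: mterm_step vtx_def)
    also have "\<dots> = (\<Sum>\<beta>\<in>{\<beta>\<in>multi_idx n (1+m). \<forall>i. vtx 1 j i \<le> \<beta> i}. mterm n y \<beta> * real (\<beta> j) / (real m + 1))"
      using j by (intro shift_sum vtx_multi) auto
    also have "\<dots> = (\<Sum>\<beta>\<in>multi_idx n (Suc m). mterm n y \<beta> * real (\<beta> j) / (real m + 1))"
      by (intro sum.mono_neutral_left finite_multi_idx) (auto simp: vtx_def split: if_splits)
    finally show "(\<Sum>\<gamma>\<in>multi_idx n m. mterm n y \<gamma> * y j / (real m + 1)) = \<dots>" .
  qed
  also have "\<dots> = (\<Sum>\<beta>\<in>multi_idx n (Suc m). mterm n y \<beta> * real (\<Sum>j\<le>n. \<beta> j) / (real m + 1))"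
    by (subst sum.swap) (simp add: sum_distrib_left sum_divide_distrib)
  also have "\<dots> = (\<Sum>\<beta>\<in>multi_idx n (Suc m). mterm n y \<beta>)"
    by (intro sum.cong refl) (auto simp: multi_idx_def add.commute)
  finally show ?case ..
qed



lemma univ_poly_zero:
  fixes a :: "nat \<Rightarrow> real"
  assumes "finite J" "\<forall>t. (\<Sum>j\<in>J. a j * t ^ j) = 0" "j \<in> J"
  shows "a j = 0"
proof -
  define N where "N = Max J"
  have JN: "J \<subseteq> {..N}" using assms(1) by (auto simp: N_def)
  have "\<forall>t. (\<Sum>i\<le>N. (if i \<in> J then a i else 0) * t ^ i) = 0"
  proof
    fix t :: real
    have "(\<Sum>i\<le>N. (if i \<in> J then a i else 0) * t ^ i) = (\<Sum>i\<in>{..N}. if i \<in> J then a i * t ^ i else 0)"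
      by (intro sum.cong) auto
    also have "\<dots> = (\<Sum>i\<in>{..N} \<inter> J. a i * t ^ i)" by (simp add: sum.inter_restrict)
    also have "{..N} \<inter> J = J" using JN by auto
    finally have "(\<Sum>i\<le>N. (if i \<in> J then a i else 0) * t ^ i) = (\<Sum>i\<in>J. a i * t ^ i)" .
    thus "(\<Sum>i\<le>N. (if i \<in> J then a i else 0) * t ^ i) = 0" using assms(2) by simp
  qed
  hence "\<forall>i\<le>N. (if i \<in> J then a i else 0) = 0" by (subst (asm) polyfun_eq_0)
  thus ?thesis using assms(3) JN by force
qed

lemma coeff_zero:
  assumes "finite I"
  shows "\<And>S c. finite S \<Longrightarrow> (\<forall>\<gamma>\<in>S. \<forall>i. i \<notin> I \<longrightarrow> \<gamma> i = 0) \<Longrightarrow>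
     (\<forall>y::nat\<Rightarrow>real. (\<Sum>\<gamma>\<in>S. c \<gamma> * (\<Prod>i\<in>I. y i ^ \<gamma> i)) = 0) \<Longrightarrow> \<gamma> \<in> S \<Longrightarrow> c \<gamma> = 0"
  using assms
proof (induction I arbitrary: \<gamma> rule: finite_induct)
  case (empty S c)
  have A: "\<forall>x\<in>S. x = (\<lambda>_. 0)" using empty by (auto simp: fun_eq_iff)
  have "x = \<gamma>" if "x \<in> S" for x using A that \<open>\<gamma> \<in> S\<close> by metis
  hence "S = {\<gamma>}" using \<open>\<gamma> \<in> S\<close> by blast
  thus ?case using empty by simp
next
  case (insert m I S c)
  define J where "J = (\<lambda>\<gamma>. \<gamma> m) ` S"
  define A where "A = (\<lambda>j y. (\<Sum>\<gamma>\<in>{\<gamma>\<in>S. \<gamma> m = j}. c \<gamma> * (\<Prod>i\<in>I. y i ^ \<gamma> i)))"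
  have fJ: "finite J" using insert by (simp add: J_def)
  have split: "(\<Sum>\<gamma>\<in>S. c \<gamma> * (\<Prod>i\<in>insert m I. y i ^ \<gamma> i)) = (\<Sum>j\<in>J. A j y * y m ^ j)" for y
  proof -
    have "(\<Sum>\<gamma>\<in>S. c \<gamma> * (\<Prod>i\<in>insert m I. y i ^ \<gamma> i)) = (\<Sum>j\<in>J. \<Sum>\<gamma>\<in>{\<gamma>\<in>S. \<gamma> m = j}. c \<gamma> * (\<Prod>i\<in>insert m I. y i ^ \<gamma> i))"
      by (rule sum.group[symmetric]) (use insert fJ in \<open>auto simp: J_def\<close>)
    also have "\<dots> = (\<Sum>j\<in>J. A j y * y m ^ j)"
      unfolding A_def sum_distrib_right
      by (intro sum.cong refl) (use insert in \<open>auto simp: algebra_simps\<close>)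
    finally show ?thesis .
  qed
  have Az: "A j y = 0" if "j \<in> J" for j y
  proof -
    have "\<forall>t. (\<Sum>j\<in>J. A j y * t ^ j) = 0"
    proof
      fix t
      have "A j (y(m := t)) = A j y" for j
        unfolding A_def using insert(2) by (intro sum.cong refl arg_cong2[where f="(*)"] prod.cong) auto
      thus "(\<Sum>j\<in>J. A j y * t ^ j) = 0"
        using split[of "y(m:=t)"] insert.prems(3)[rule_format, of "y(m:=t)"] by simp
    qed
    from univ_poly_zero[OF fJ this that] show ?thesis .
  qed
  define j where "j = \<gamma> m"
  have jJ: "j \<in> J" using insert by (simp add: J_def j_def)
  define S' where "S' = (\<lambda>\<gamma>. \<gamma>(m := 0)) ` {\<gamma>\<in>S. \<gamma> m = j}"
  define c' where "c' = (\<lambda>\<gamma>'. c (\<gamma>'(m := j)))"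
  have inj: "inj_on (\<lambda>\<gamma>. \<gamma>(m := 0)) {\<gamma>\<in>S. \<gamma> m = j}"
  proof (rule inj_onI)
    fix x y assume "x \<in> {\<gamma>\<in>S. \<gamma> m = j}" "y \<in> {\<gamma>\<in>S. \<gamma> m = j}" "x(m := 0) = y(m := 0)"
    thus "x = y" by (metis (mono_tags, lifting) fun_upd_triv fun_upd_upd mem_Collect_eq)
  qed
  have "c' \<gamma>' = 0" if "\<gamma>' \<in> S'" for \<gamma>'
  proof (rule insert.IH[of S' c'])
    show "finite S'" using insert by (simp add: S'_def)
    show "\<forall>\<gamma>\<in>S'. \<forall>i. i \<notin> I \<longrightarrow> \<gamma> i = 0" using insert by (auto simp: S'_def)
    show "\<forall>y. (\<Sum>\<gamma>\<in>S'. c' \<gamma> * (\<Prod>i\<in>I. y i ^ \<gamma> i)) = 0"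
    proof
      fix y :: "nat \<Rightarrow> real"
      have "(\<Sum>\<gamma>\<in>S'. c' \<gamma> * (\<Prod>i\<in>I. y i ^ \<gamma> i)) = (\<Sum>\<gamma>\<in>{\<gamma>\<in>S. \<gamma> m = j}. c' (\<gamma>(m:=0)) * (\<Prod>i\<in>I. y i ^ (\<gamma>(m:=0)) i))"
        unfolding S'_def by (rule sum.reindex[OF inj, unfolded comp_def])
      also have "\<dots> = A j y" unfolding A_def c'_def
        using insert(2) by (intro sum.cong refl arg_cong2[where f="(*)"] prod.cong) auto
      finally show "(\<Sum>\<gamma>\<in>S'. c' \<gamma> * (\<Prod>i\<in>I. y i ^ \<gamma> i)) = 0" using Az[OF jJ] by simp
    qed
    show "\<gamma>' \<in> S'" by fact
  qed
  moreover have "\<gamma>(m := 0) \<in> S'" using insert by (auto simp: S'_def j_def)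
  ultimately have "c' (\<gamma>(m := 0)) = 0" by blast
  thus ?case by (simp add: c'_def j_def)
qed

lemma sum_atMost_split0: "(\<Sum>i\<le>n. f i) = f 0 + (\<Sum>i=1..n. f i)" for f :: "nat \<Rightarrow> 'a::comm_monoid_add"
  by (simp add: atMost_atLeast0 sum.atLeast_Suc_atMost)

lemma homog_zero:
  assumes "\<forall>x. (\<Sum>\<alpha>\<in>multi_idx n k. c \<alpha> * (\<Prod>i\<le>n. bary n x i ^ \<alpha> i)) = 0"
  shows "(\<Sum>\<alpha>\<in>multi_idx n k. c \<alpha> * (\<Prod>i\<le>n. y i ^ \<alpha> i)) = 0"
proof -
  define H where "H = (\<lambda>y::nat\<Rightarrow>real. (\<Sum>\<alpha>\<in>multi_idx n k. c \<alpha> * (\<Prod>i\<le>n. y i ^ \<alpha> i)))"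
  have nz: "H y = 0" if s: "(\<Sum>i\<le>n. y i) \<noteq> 0" for y
  proof -
    define s where "s = (\<Sum>i\<le>n. y i)"
    define x where "x = (\<lambda>i. if i \<in> {1..n} then y i / s else 0)"
    have bx: "bary n x i = y i / s" if "i \<le> n" for i
    proof (cases "i = 0")
      case True
      have "(\<Sum>j=1..n. x j) = (\<Sum>j=1..n. y j) / s" by (simp add: x_def sum_divide_distrib)
      moreover have "s = y 0 + (\<Sum>j=1..n. y j)" unfolding s_def by (rule sum_atMost_split0)
      ultimately show ?thesis using True \<open>(\<Sum>i\<le>n. y i) \<noteq> 0\<close>
        by (simp add: bary_def field_simps s_def)
    next
      case False thus ?thesis using that by (simp add: bary_def x_def)
    qed
    have "0 = (\<Sum>\<alpha>\<in>multi_idx n k. c \<alpha> * (\<Prod>i\<le>n. bary n x i ^ \<alpha> i))" using assms by simp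
    also have "\<dots> = (\<Sum>\<alpha>\<in>multi_idx n k. c \<alpha> * (\<Prod>i\<le>n. y i ^ \<alpha> i) / s ^ k)"
    proof (intro sum.cong refl)
      fix \<alpha> assume a: "\<alpha> \<in> multi_idx n k"
      have "(\<Prod>i\<le>n. bary n x i ^ \<alpha> i) = (\<Prod>i\<le>n. y i ^ \<alpha> i / s ^ \<alpha> i)"
        using bx by (intro prod.cong) (auto simp: power_divide)
      also have "\<dots> = (\<Prod>i\<le>n. y i ^ \<alpha> i) / (\<Prod>i\<le>n. s ^ \<alpha> i)" by (rule prod_dividef)
      also have "(\<Prod>i\<le>n. s ^ \<alpha> i) = s ^ k" using a by (simp add: power_sum[symmetric] multi_idx_def)
      finally show "c \<alpha> * (\<Prod>i\<le>n. bary n x i ^ \<alpha> i) = c \<alpha> * (\<Prod>i\<le>n. y i ^ \<alpha> i) / s ^ k" by simp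
    qed
    also have "\<dots> = H y / s ^ k" by (simp add: H_def sum_divide_distrib)
    finally show ?thesis using that by (simp add: s_def)
  qed
  show ?thesis
  proof (cases "(\<Sum>i\<le>n. y i) = 0")
    case False thus ?thesis using nz by (simp add: H_def)
  next
    case True
    define g where "g = (\<lambda>t. H (\<lambda>i. if i = 0 then y 0 + t else y i))"
    have ci: "continuous_on UNIV (\<lambda>t::real. if i = 0 then y 0 + t else y i)" for i
      by (cases "i = 0") (auto intro!: continuous_intros)
    have "continuous_on UNIV g" unfolding g_def H_def
      by (intro continuous_intros ci)
    hence "(g \<longlongrightarrow> g 0) (at 0)" by (simp add: continuous_on_def)
    moreover have "(g \<longlongrightarrow> 0) (at 0)"
    proof (rule tendsto_eventually)
      have "g t = 0" if "t \<noteq> 0" for t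
      proof -
        have "(\<Sum>i\<le>n. (if i = 0 then y 0 + t else y i)) = (\<Sum>i\<le>n. y i) + t"
          by (simp add: sum_atMost_split0)
        thus ?thesis unfolding g_def using nz True that by simp
      qed
      thus "\<forall>\<^sub>F t in at 0. g t = 0" by (auto simp: eventually_at_filter)
    qed
    ultimately have "g 0 = 0" by (rule tendsto_unique[rotated]) simp
    moreover have "(\<lambda>i. if i = 0 then y 0 + 0 else y i) = y" by auto
    ultimately have "H y = 0" unfolding g_def by metis
    thus ?thesis by (simp add: H_def)
  qed
qed

lemma bary_coeff_zero:
  assumes "\<forall>x. (\<Sum>\<alpha>\<in>multi_idx n k. c \<alpha> * (\<Prod>i\<le>n. bary n x i ^ \<alpha> i)) = 0" "\<alpha> \<in> multi_idx n k"
  shows "c \<alpha> = 0"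
proof (rule coeff_zero[of "{..n}" "multi_idx n k" c])
  show "finite (multi_idx n k)" by (rule finite_multi_idx)
  show "\<forall>\<gamma>\<in>multi_idx n k. \<forall>i. i \<notin> {..n} \<longrightarrow> \<gamma> i = 0" by (auto simp: multi_idx_def)
  show "\<forall>y::nat\<Rightarrow>real. (\<Sum>\<gamma>\<in>multi_idx n k. c \<gamma> * (\<Prod>i\<in>{..n}. y i ^ \<gamma> i)) = 0"
    using homog_zero[OF assms(1)] by simp
qed (use assms in auto)

lemma bern_coeff_eq:
  assumes "\<forall>\<alpha>. \<alpha> \<notin> multi_idx n k \<longrightarrow> d \<alpha> = 0"
    and "\<forall>x. peval n c x = (\<Sum>\<alpha>\<in>multi_idx n k. d \<alpha> * bernstein n k \<alpha> x)"
  shows "bern_coeff n c k = d"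
  unfolding bern_coeff_def
proof (rule the_equality)
  show "(\<forall>\<alpha>. \<alpha> \<notin> multi_idx n k \<longrightarrow> d \<alpha> = 0) \<and> (\<forall>x. peval n c x = (\<Sum>\<alpha>\<in>multi_idx n k. d \<alpha> * bernstein n k \<alpha> x))"
    using assms by blast
  fix b assume b: "(\<forall>\<alpha>. \<alpha> \<notin> multi_idx n k \<longrightarrow> b \<alpha> = 0) \<and> (\<forall>x. peval n c x = (\<Sum>\<alpha>\<in>multi_idx n k. b \<alpha> * bernstein n k \<alpha> x))"
  show "b = d"
  proof
    fix \<alpha> show "b \<alpha> = d \<alpha>"
    proof (cases "\<alpha> \<in> multi_idx n k")
      case False thus ?thesis using b assms by auto
    next
      case True
      define e where "e = (\<lambda>\<alpha>. (b \<alpha> - d \<alpha>) * (fact k / (\<Prod>i\<le>n. fact (\<alpha> i))))"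
      have "\<forall>x. (\<Sum>\<alpha>\<in>multi_idx n k. e \<alpha> * (\<Prod>i\<le>n. bary n x i ^ \<alpha> i)) = 0"
      proof
        fix x
        have "(\<Sum>\<alpha>\<in>multi_idx n k. e \<alpha> * (\<Prod>i\<le>n. bary n x i ^ \<alpha> i))
          = (\<Sum>\<alpha>\<in>multi_idx n k. b \<alpha> * bernstein n k \<alpha> x) - (\<Sum>\<alpha>\<in>multi_idx n k. d \<alpha> * bernstein n k \<alpha> x)"
          by (simp add: e_def bernstein_def sum_subtractf[symmetric] algebra_simps diff_divide_distrib)
        thus "(\<Sum>\<alpha>\<in>multi_idx n k. e \<alpha> * (\<Prod>i\<le>n. bary n x i ^ \<alpha> i)) = 0"
          using b assms by simp
      qed
      from bary_coeff_zero[OF this True] have "e \<alpha> = 0" .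
      moreover have "fact k / (\<Prod>i\<le>n. fact (\<alpha> i)) \<noteq> (0::real)" by simp
      ultimately show ?thesis by (simp add: e_def)
    qed
  qed
qed



lemma sum_bary: "(\<Sum>i\<le>n. bary n x i) = 1"
  by (simp add: sum_atMost_split0 bary_def)

lemma bernstein_mterm: "bernstein n k \<alpha> x = fact k * mterm n (bary n x) \<alpha>"
  by (simp add: bernstein_def mterm_def prod_dividef)

lemma partition_unity: "(\<Sum>\<alpha>\<in>multi_idx n k. bernstein n k \<alpha> x) = 1"
  by (simp add: bernstein_mterm sum_distrib_left[symmetric] multinomial sum_bary)

definition rep :: "nat \<Rightarrow> nat \<Rightarrow> ((nat \<Rightarrow> real) \<Rightarrow> real) \<Rightarrow> bool" where
  "rep n k f \<longleftrightarrow> (\<exists>d. (\<forall>\<alpha>. \<alpha> \<notin> multi_idx n k \<longrightarrow> d \<alpha> = 0) \<and>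
      (\<forall>x. f x = (\<Sum>\<alpha>\<in>multi_idx n k. d \<alpha> * bernstein n k \<alpha> x)))"

lemma rep_zero: "rep n k (\<lambda>x. 0)"
  unfolding rep_def by (rule exI[of _ "\<lambda>_. 0"]) simp

lemma rep_add: "rep n k f \<Longrightarrow> rep n k g \<Longrightarrow> rep n k (\<lambda>x. f x + g x)"
  unfolding rep_def
proof (elim exE conjE)
  fix d e assume "\<forall>\<alpha>. \<alpha> \<notin> multi_idx n k \<longrightarrow> d \<alpha> = 0" "\<forall>x. f x = (\<Sum>\<alpha>\<in>multi_idx n k. d \<alpha> * bernstein n k \<alpha> x)"
    "\<forall>\<alpha>. \<alpha> \<notin> multi_idx n k \<longrightarrow> e \<alpha> = 0" "\<forall>x. g x = (\<Sum>\<alpha>\<in>multi_idx n k. e \<alpha> * bernstein n k \<alpha> x)"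
  thus "\<exists>d. (\<forall>\<alpha>. \<alpha> \<notin> multi_idx n k \<longrightarrow> d \<alpha> = 0) \<and> (\<forall>x. f x + g x = (\<Sum>\<alpha>\<in>multi_idx n k. d \<alpha> * bernstein n k \<alpha> x))"
    by (intro exI[of _ "\<lambda>\<alpha>. d \<alpha> + e \<alpha>"]) (simp add: algebra_simps sum.distrib)
qed

lemma rep_scale: "rep n k f \<Longrightarrow> rep n k (\<lambda>x. c * f x)"
  unfolding rep_def
proof (elim exE conjE)
  fix d assume "\<forall>\<alpha>. \<alpha> \<notin> multi_idx n k \<longrightarrow> d \<alpha> = 0" "\<forall>x. f x = (\<Sum>\<alpha>\<in>multi_idx n k. d \<alpha> * bernstein n k \<alpha> x)"
  thus "\<exists>d. (\<forall>\<alpha>. \<alpha> \<notin> multi_idx n k \<longrightarrow> d \<alpha> = 0) \<and> (\<forall>x. c * f x = (\<Sum>\<alpha>\<in>multi_idx n k. d \<alpha> * bernstein n k \<alpha> x))"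
    by (intro exI[of _ "\<lambda>\<alpha>. c * d \<alpha>"]) (simp add: algebra_simps sum_distrib_left)
qed

lemma rep_sum: "finite A \<Longrightarrow> (\<And>a. a \<in> A \<Longrightarrow> rep n k (f a)) \<Longrightarrow> rep n k (\<lambda>x. \<Sum>a\<in>A. f a x)"
  by (induction A rule: finite_induct) (auto intro: rep_zero rep_add)

lemma rep_basis:
  assumes "\<alpha> \<in> multi_idx n k"
  shows "rep n k (\<lambda>x. \<Prod>i\<le>n. bary n x i ^ \<alpha> i)"
  unfolding rep_def
proof (intro exI[of _ "\<lambda>\<beta>. if \<beta> = \<alpha> then (\<Prod>i\<le>n. fact (\<alpha> i)) / fact k else 0"] conjI allI impI)
  fix x
  show "(\<Prod>i\<le>n. bary n x i ^ \<alpha> i) = (\<Sum>\<beta>\<in>multi_idx n k. (if \<beta> = \<alpha> then (\<Prod>i\<le>n. fact (\<alpha> i)) / fact k else 0) * bernstein n k \<beta> x)"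
  proof -
    have "(\<Sum>\<beta>\<in>multi_idx n k. (if \<beta> = \<alpha> then (\<Prod>i\<le>n. fact (\<alpha> i)) / fact k else 0) * bernstein n k \<beta> x)
       = (\<Sum>\<beta>\<in>multi_idx n k. if \<beta> = \<alpha> then (\<Prod>i\<le>n. fact (\<alpha> i)) / fact k * bernstein n k \<alpha> x else 0)"
      by (rule sum.cong) auto
    also have "\<dots> = (\<Prod>i\<le>n. fact (\<alpha> i)) / fact k * bernstein n k \<alpha> x"
      using assms by (simp add: finite_multi_idx)
    also have "\<dots> = (\<Prod>i\<le>n. bary n x i ^ \<alpha> i)"
      by (simp add: bernstein_def)
    finally show ?thesis by simp
  qed
qed (use assms in auto)

lemma rep_monomial:
  assumes "\<forall>i. i \<notin> {1..n} \<longrightarrow> \<beta> i = 0" "(\<Sum>i=1..n. \<beta> i) \<le> l"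
  shows "rep n l (\<lambda>x. \<Prod>i=1..n. x i ^ \<beta> i)"
proof -
  define m where "m = l - (\<Sum>i=1..n. \<beta> i)"
  have b0: "\<beta> 0 = 0" using assms by auto
  have bM: "\<beta> \<in> multi_idx n (\<Sum>i=1..n. \<beta> i)"
    using assms b0 by (auto simp: multi_idx_def sum_atMost_split0)
  have eq: "(\<Prod>i=1..n. x i ^ \<beta> i) = (\<Sum>\<gamma>\<in>multi_idx n m. (fact m / (\<Prod>i\<le>n. fact (\<gamma> i))) *
             (\<Prod>i\<le>n. bary n x i ^ (\<beta> i + \<gamma> i)))" for x
  proof -
    have "(\<Prod>i=1..n. x i ^ \<beta> i) = (\<Prod>i\<le>n. bary n x i ^ \<beta> i)"
      using b0 by (simp add: atMost_atLeast0 prod.atLeast_Suc_atMost bary_def)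
    also have "\<dots> = (\<Prod>i\<le>n. bary n x i ^ \<beta> i) * (fact m * (\<Sum>\<gamma>\<in>multi_idx n m. mterm n (bary n x) \<gamma>))"
      by (simp add: multinomial sum_bary)
    also have "\<dots> = (\<Sum>\<gamma>\<in>multi_idx n m. (fact m / (\<Prod>i\<le>n. fact (\<gamma> i))) * (\<Prod>i\<le>n. bary n x i ^ (\<beta> i + \<gamma> i)))"
      by (simp add: sum_distrib_left mterm_def prod_dividef power_add prod.distrib mult_ac)
    finally show ?thesis .
  qed
  have "rep n l (\<lambda>x. \<Sum>\<gamma>\<in>multi_idx n m. (fact m / (\<Prod>i\<le>n. fact (\<gamma> i))) * (\<Prod>i\<le>n. bary n x i ^ (\<beta> i + \<gamma> i)))"
  proof (intro rep_sum finite_multi_idx rep_scale rep_basis)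
    fix \<gamma> assume "\<gamma> \<in> multi_idx n m"
    thus "(\<lambda>i. \<beta> i + \<gamma> i) \<in> multi_idx n l"
      using bM assms(2) by (auto simp: multi_idx_def sum.distrib m_def)
  qed
  thus ?thesis by (subst eq)
qed

lemma rep_peval:
  assumes "is_poly_deg n l c"
  shows "rep n l (peval n c)"
proof -
  have "rep n l (\<lambda>x. \<Sum>\<beta>\<in>{\<beta>. c \<beta> \<noteq> 0}. c \<beta> * (\<Prod>i=1..n. x i ^ \<beta> i))"
    using assms unfolding is_poly_deg_def by (intro rep_sum rep_scale rep_monomial) auto
  thus ?thesis by (simp add: peval_def[abs_def])
qed

lemma bern_coeff_rep:
  assumes "is_poly_deg n l c"
  shows "\<forall>x. peval n c x = (\<Sum>\<alpha>\<in>multi_idx n l. bern_coeff n c l \<alpha> * bernstein n l \<alpha> x)"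
proof -
  obtain d where d: "\<forall>\<alpha>. \<alpha> \<notin> multi_idx n l \<longrightarrow> d \<alpha> = 0" "\<forall>x. peval n c x = (\<Sum>\<alpha>\<in>multi_idx n l. d \<alpha> * bernstein n l \<alpha> x)"
    using rep_peval[OF assms] unfolding rep_def by blast
  from bern_coeff_eq[OF d] d(2) show ?thesis by simp
qed



definition ff :: "nat \<Rightarrow> nat \<Rightarrow> real" where
  "ff m a = (\<Prod>j<a. real m - real j)"

lemma ff_step: "ff m (Suc a) = ff m a * (real m - real a)"
  by (simp add: ff_def)

lemma ff_fact: "a \<le> m \<Longrightarrow> ff m a = fact m / fact (m - a)"
proof (induction a)
  case 0 thus ?case by (simp add: ff_def)
next
  case (Suc a)
  have "fact (m - a) = real (m - a) * (fact (m - Suc a) :: real)"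
    using Suc.prems by (metis Suc_diff_Suc fact_Suc less_eq_Suc_le of_nat_Suc diff_Suc_Suc)
  have "ff m (Suc a) = fact m / fact (m - a) * real (m - a)"
    using Suc by (simp add: ff_step of_nat_diff)
  also have "\<dots> = fact m / fact (m - Suc a)"
    using \<open>fact (m - a) = _\<close> Suc.prems by simp
  finally show ?case .
qed

lemma ff_zero: "m < a \<Longrightarrow> ff m a = 0"
  unfolding ff_def by (rule prod_zero) auto

lemma ff_nonneg: "0 \<le> ff m a"
  by (cases "a \<le> m") (auto simp: ff_fact ff_zero)

lemma ff_pos: "a \<le> m \<Longrightarrow> 0 < ff m a"
  by (simp add: ff_fact)

lemma ff_le: "ff m a \<le> real m ^ a"
proof (cases "a \<le> m")
  case True
  have "ff m a \<le> (\<Prod>j<a. real m)" unfolding ff_def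
    using True by (intro prod_mono) auto
  thus ?thesis by simp
next
  case False thus ?thesis by (simp add: ff_zero)
qed

lemma ff_div_fact: "ff m a / fact m = (if a \<le> m then 1 / fact (m - a) else 0)"
  by (auto simp: ff_fact ff_zero)


lemma elev_sum:
  assumes "\<alpha> \<in> multi_idx n l" "l \<le> k"
  shows "(\<Sum>\<beta>\<in>multi_idx n k. (\<Prod>i\<le>n. ff (\<beta> i) (\<alpha> i) / fact (\<beta> i)) * (\<Prod>i\<le>n. y i ^ \<beta> i))
    = (\<Prod>i\<le>n. y i ^ \<alpha> i) * (\<Sum>i\<le>n. y i) ^ (k - l) / fact (k - l)"
proof -
  define g where "g = (\<lambda>\<beta>. (\<Prod>i\<le>n. ff (\<beta> i) (\<alpha> i) / fact (\<beta> i)) * (\<Prod>i\<le>n. y i ^ \<beta> i))"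
  have "(\<Prod>i\<le>n. y i ^ \<alpha> i) * (\<Sum>i\<le>n. y i) ^ (k - l) / fact (k - l)
      = (\<Sum>\<gamma>\<in>multi_idx n (k - l). (\<Prod>i\<le>n. y i ^ \<alpha> i) * mterm n y \<gamma>)"
    by (simp add: sum_distrib_left[symmetric] multinomial)
  also have "\<dots> = (\<Sum>\<gamma>\<in>multi_idx n (k - l). g (\<lambda>i. \<alpha> i + \<gamma> i))"
    by (intro sum.cong refl)
       (simp add: g_def mterm_def ff_div_fact prod_dividef power_add prod.distrib)
  also have "\<dots> = (\<Sum>\<beta>\<in>{\<beta>\<in>multi_idx n (l + (k - l)). \<forall>i. \<alpha> i \<le> \<beta> i}. g \<beta>)"
    by (rule shift_sum[OF assms(1)])
  also have "\<dots> = (\<Sum>\<beta>\<in>multi_idx n k. g \<beta>)"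
  proof (rule sum.mono_neutral_left)
    show "finite (multi_idx n k)" by (rule finite_multi_idx)
    show "{\<beta>\<in>multi_idx n (l + (k - l)). \<forall>i. \<alpha> i \<le> \<beta> i} \<subseteq> multi_idx n k" using assms by auto
    show "\<forall>\<beta>\<in>multi_idx n k - {\<beta>\<in>multi_idx n (l + (k - l)). \<forall>i. \<alpha> i \<le> \<beta> i}. g \<beta> = 0"
    proof
      fix \<beta> assume b: "\<beta> \<in> multi_idx n k - {\<beta>\<in>multi_idx n (l + (k - l)). \<forall>i. \<alpha> i \<le> \<beta> i}"
      then obtain i where i: "\<beta> i < \<alpha> i" using assms by (auto simp: not_le)
      have "i \<le> n"
      proof (rule ccontr)
        assume "\<not> i \<le> n"
        hence "\<alpha> i = 0" using assms(1) by (auto simp: multi_idx_def)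
        thus False using i by simp
      qed
      hence "(\<Prod>i\<le>n. ff (\<beta> i) (\<alpha> i) / fact (\<beta> i)) = 0"
        using i by (intro prod_zero) (auto intro!: bexI[of _ i] simp: ff_zero)
      thus "g \<beta> = 0" by (simp add: g_def)
    qed
  qed
  finally show ?thesis by (simp add: g_def)
qed

definition ecoef :: "nat \<Rightarrow> nat \<Rightarrow> nat \<Rightarrow> (nat \<Rightarrow> nat) \<Rightarrow> (nat \<Rightarrow> nat) \<Rightarrow> real" where
  "ecoef n l k \<alpha> \<beta> = (if \<beta> \<in> multi_idx n k then
     fact l / (\<Prod>i\<le>n. fact (\<alpha> i)) * (\<Prod>i\<le>n. ff (\<beta> i) (\<alpha> i)) / ff k l else 0)"

lemma bernstein_elev:
  assumes "\<alpha> \<in> multi_idx n l" "l \<le> k"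
  shows "bernstein n l \<alpha> x = (\<Sum>\<beta>\<in>multi_idx n k. ecoef n l k \<alpha> \<beta> * bernstein n k \<beta> x)"
proof -
  define C where "C = fact l / (\<Prod>i\<le>n. fact (\<alpha> i)) * (fact k / ff k l :: real)"
  have Ck: "fact k / ff k l = (fact (k - l) :: real)" using assms(2) by (simp add: ff_fact)
  have "(\<Sum>\<beta>\<in>multi_idx n k. ecoef n l k \<alpha> \<beta> * bernstein n k \<beta> x)
     = (\<Sum>\<beta>\<in>multi_idx n k. C * ((\<Prod>i\<le>n. ff (\<beta> i) (\<alpha> i) / fact (\<beta> i)) * (\<Prod>i\<le>n. bary n x i ^ \<beta> i)))"
    by (intro sum.cong refl) (simp add: ecoef_def bernstein_def C_def prod_dividef)
  also have "\<dots> = C * ((\<Prod>i\<le>n. bary n x i ^ \<alpha> i) / fact (k - l))"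
    by (simp add: sum_distrib_left[symmetric] elev_sum[OF assms] sum_bary)
  also have "\<dots> = bernstein n l \<alpha> x"
    by (simp add: C_def Ck bernstein_def)
  finally show ?thesis ..
qed

lemma bern_coeff_elev:
  assumes "\<forall>x. peval n c x = (\<Sum>\<alpha>\<in>multi_idx n l. b \<alpha> * bernstein n l \<alpha> x)" "l \<le> k"
  shows "bern_coeff n c k = (\<lambda>\<beta>. \<Sum>\<alpha>\<in>multi_idx n l. b \<alpha> * ecoef n l k \<alpha> \<beta>)"
proof (rule bern_coeff_eq)
  show "\<forall>\<beta>. \<beta> \<notin> multi_idx n k \<longrightarrow> (\<Sum>\<alpha>\<in>multi_idx n l. b \<alpha> * ecoef n l k \<alpha> \<beta>) = 0"
    by (simp add: ecoef_def)
  show "\<forall>x. peval n c x = (\<Sum>\<beta>\<in>multi_idx n k. (\<Sum>\<alpha>\<in>multi_idx n l. b \<alpha> * ecoef n l k \<alpha> \<beta>) * bernstein n k \<beta> x)"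
  proof
    fix x
    have "peval n c x = (\<Sum>\<alpha>\<in>multi_idx n l. b \<alpha> * (\<Sum>\<beta>\<in>multi_idx n k. ecoef n l k \<alpha> \<beta> * bernstein n k \<beta> x))"
      using assms bernstein_elev by simp
    also have "\<dots> = (\<Sum>\<beta>\<in>multi_idx n k. (\<Sum>\<alpha>\<in>multi_idx n l. b \<alpha> * ecoef n l k \<alpha> \<beta>) * bernstein n k \<beta> x)"
      unfolding sum_distrib_left sum_distrib_right by (subst sum.swap) (simp add: mult.assoc)
    finally show "peval n c x = \<dots>" .
  qed
qed

definition one_poly :: mpoly where "one_poly = (\<lambda>\<beta>. if \<beta> = (\<lambda>_. 0) then 1 else 0)"

lemma peval_one: "peval n one_poly x = 1"
proof -
  have "{\<beta>. one_poly \<beta> \<noteq> 0} = {\<lambda>_. 0}" by (auto simp: one_poly_def)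
  thus ?thesis by (simp add: peval_def one_poly_def)
qed

lemma ecoef_sum:
  assumes "\<beta> \<in> multi_idx n k" "l \<le> k"
  shows "(\<Sum>\<alpha>\<in>multi_idx n l. ecoef n l k \<alpha> \<beta>) = 1"
proof -
  have h1: "\<forall>x. peval n one_poly x = (\<Sum>\<alpha>\<in>multi_idx n l. 1 * bernstein n l \<alpha> x)"
    by (simp add: peval_one partition_unity)
  have h2: "\<forall>x. peval n one_poly x = (\<Sum>\<alpha>\<in>multi_idx n k. (if \<alpha> \<in> multi_idx n k then 1 else 0) * bernstein n k \<alpha> x)"
    by (simp add: peval_one partition_unity)
  have "bern_coeff n one_poly k = (\<lambda>\<alpha>. if \<alpha> \<in> multi_idx n k then 1 else 0)"
    by (rule bern_coeff_eq) (use h2 in auto)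
  hence e1: "bern_coeff n one_poly k \<beta> = 1" using assms(1) by simp
  have "bern_coeff n one_poly k = (\<lambda>\<beta>. \<Sum>\<alpha>\<in>multi_idx n l. 1 * ecoef n l k \<alpha> \<beta>)"
    by (rule bern_coeff_elev[OF h1 assms(2)])
  hence e2: "bern_coeff n one_poly k \<beta> = (\<Sum>\<alpha>\<in>multi_idx n l. ecoef n l k \<alpha> \<beta>)" by simp
  from e1 e2 show ?thesis by simp
qed



lemma ffi: "l \<le> k \<Longrightarrow> real k * (real k ^ l - ff k l) \<le> real k ^ l * (real (l * (l - 1)) / 2)"
proof (induction l)
  case 0 thus ?case by (simp add: ff_def)
next
  case (Suc l)
  have IH: "real k * (real k ^ l - ff k l) \<le> real k ^ l * (real (l * (l - 1)) / 2)" using Suc by simp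
  have ffle: "ff k l \<le> real k ^ l" by (rule ff_le)
  have e1: "real k ^ Suc l - ff k (Suc l) = real k * (real k ^ l - ff k l) + real l * ff k l"
    by (simp add: ff_step algebra_simps)
  have e2: "real (Suc l * (Suc l - 1)) / 2 = real (l * (l - 1)) / 2 + real l"
    by (cases l) (auto simp: field_simps)
  have "real k * (real k ^ Suc l - ff k (Suc l)) = real k * (real k * (real k ^ l - ff k l)) + real k * real l * ff k l"
    by (subst e1) (simp add: algebra_simps)
  also have "\<dots> \<le> real k * (real k ^ l * (real (l * (l - 1)) / 2)) + real k * real l * real k ^ l"
    by (intro add_mono mult_left_mono IH ffle) auto
  also have "\<dots> = real k ^ Suc l * (real (Suc l * (Suc l - 1)) / 2)"
    by (simp only: e2) (simp add: field_simps)
  finally show ?case .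
qed

lemma bary_nonneg: "x \<in> std_simplex n \<Longrightarrow> i \<le> n \<Longrightarrow> 0 \<le> bary n x i"
  by (auto simp: std_simplex_def bary_def)

lemma bernstein_nonneg: "x \<in> std_simplex n \<Longrightarrow> 0 \<le> bernstein n k \<alpha> x"
  unfolding bernstein_def by (intro mult_nonneg_nonneg divide_nonneg_nonneg prod_nonneg zero_le_power bary_nonneg) auto



lemma mterm_scale:
  assumes "\<alpha> \<in> multi_idx n l"
  shows "mterm n (\<lambda>i. y i / s) \<alpha> = mterm n y \<alpha> / s ^ l"
proof -
  have "mterm n (\<lambda>i. y i / s) \<alpha> = (\<Prod>i\<le>n. (y i ^ \<alpha> i / fact (\<alpha> i)) / s ^ \<alpha> i)"
    unfolding mterm_def by (intro prod.cong) (auto simp: power_divide)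
  also have "\<dots> = mterm n y \<alpha> / (\<Prod>i\<le>n. s ^ \<alpha> i)" unfolding mterm_def by (rule prod_dividef)
  also have "(\<Prod>i\<le>n. s ^ \<alpha> i) = s ^ l" using assms by (simp add: power_sum[symmetric] multi_idx_def)
  finally show ?thesis .
qed

theorem corollary5p14:
  fixes n l k :: nat and p q :: mpoly
  assumes "is_poly_deg n l p" and "is_poly_deg n l q"
    and "\<forall>x\<in>std_simplex n. peval n p x / peval n q x > 0"
    and "\<forall>j\<ge>l. \<forall>\<alpha>\<in>multi_idx n j. bern_coeff n q j \<alpha> > 0"
    and "\<forall>x\<in>std_simplex n. peval n p x > 0"
    and "real k > real (l * (l - 1)) / 2 *
           Max ((\<lambda>\<alpha>. \<bar>bern_coeff n p l \<alpha>\<bar>) ` multi_idx n l)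
           / (INF x\<in>std_simplex n. peval n p x)"
  shows "(\<forall>\<alpha>\<in>multi_idx n k. bern_coeff n p k \<alpha> / bern_coeff n q k \<alpha> \<ge> 0) \<and>
         (\<forall>i\<le>n. bern_coeff n p k (vtx k i) / bern_coeff n q k (vtx k i) > 0)"
proof -
  define b where "b = bern_coeff n p l"
  define P where "P = (INF x\<in>std_simplex n. peval n p x)"
  define M where "M = Max ((\<lambda>\<alpha>. \<bar>b \<alpha>\<bar>) ` multi_idx n l)"
  define c where "c = real (l * (l - 1)) / 2"
  have hk: "real k > c * M / P" using assms(6) unfolding c_def M_def b_def P_def .
  have rep: "\<forall>x. peval n p x = (\<Sum>\<alpha>\<in>multi_idx n l. b \<alpha> * bernstein n l \<alpha> x)"
    using bern_coeff_rep[OF assms(1)] by (simp add: b_def)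
  obtain x0 where x0: "x0 \<in> std_simplex n" "\<forall>y\<in>std_simplex n. peval n p x0 \<le> peval n p y"
    using continuous_attains_inf[OF compact_simplex _ peval_cont] zero_in_simplex by blast
  have P_eq: "P = peval n p x0"
  proof -
    have "P \<le> peval n p x0" unfolding P_def
      by (rule cINF_lower[OF _ x0(1)]) (use x0 in \<open>auto intro: bdd_belowI2\<close>)
    moreover have "peval n p x0 \<le> P" unfolding P_def
      by (rule cINF_greatest) (use x0 zero_in_simplex in auto)
    ultimately show ?thesis by simp
  qed
  have Ppos: "P > 0" using P_eq assms(5) x0 by simp
  have Ple: "P \<le> peval n p x" if "x \<in> std_simplex n" for x using P_eq x0 that by simp
  have Mge: "\<bar>b \<alpha>\<bar> \<le> M" if "\<alpha> \<in> multi_idx n l" for \<alpha>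
    unfolding M_def using that by (intro Max_ge finite_imageI finite_multi_idx) auto
  have pleM: "peval n p x \<le> M" if "x \<in> std_simplex n" for x
  proof -
    have "peval n p x = (\<Sum>\<alpha>\<in>multi_idx n l. b \<alpha> * bernstein n l \<alpha> x)" using rep by simp
    also have "\<dots> \<le> (\<Sum>\<alpha>\<in>multi_idx n l. M * bernstein n l \<alpha> x)"
    proof (intro sum_mono mult_right_mono)
      fix \<alpha> assume "\<alpha> \<in> multi_idx n l"
      thus "b \<alpha> \<le> M" using Mge[of \<alpha>] by linarith
      show "0 \<le> bernstein n l \<alpha> x" by (rule bernstein_nonneg[OF that])
    qed
    also have "\<dots> = M" by (simp add: sum_distrib_left[symmetric] partition_unity)
    finally show ?thesis .
  qed
  have PM: "P \<le> M" using Ple[OF zero_in_simplex] pleM[OF zero_in_simplex] by simp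
  have c0: "c \<ge> 0" by (simp add: c_def)
  have cl: "c \<ge> real l - 1"
  proof (cases "l \<le> 1")
    case True thus ?thesis by (cases l) (auto simp: c_def)
  next
    case False
    hence "2 * (l - 1) \<le> l * (l - 1)" by (intro mult_right_mono) auto
    hence "real (2 * (l - 1)) \<le> real (l * (l - 1))" by (simp only: of_nat_le_iff)
    thus ?thesis using False by (simp add: c_def of_nat_diff)
  qed
  have "c * P \<le> c * M" by (rule mult_left_mono[OF PM c0])
  hence MP: "c * M / P \<ge> c" using Ppos by (simp add: le_divide_eq)
  have kpos: "real k > 0" using hk MP c0 by linarith
  have kl: "l \<le> k"
  proof (rule ccontr)
    assume "\<not> l \<le> k"
    hence "real k + 1 \<le> real l" by simp
    thus False using hk MP cl by linarith
  qed
  have cMP: "c * M < real k * P" using hk Ppos by (simp add: divide_less_eq mult.commute)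
  have M0: "M \<ge> 0" using PM Ppos by simp
  have dk: "bern_coeff n p k = (\<lambda>\<beta>. \<Sum>\<alpha>\<in>multi_idx n l. b \<alpha> * ecoef n l k \<alpha> \<beta>)"
    by (rule bern_coeff_elev[OF rep kl])
  have dpos: "bern_coeff n p k \<beta> > 0" if bM: "\<beta> \<in> multi_idx n k" for \<beta>
  proof -
    define xg where "xg = (\<lambda>i. if i \<in> {1..n} then real (\<beta> i) / real k else 0)"
    have "k = \<beta> 0 + (\<Sum>i=1..n. \<beta> i)" using bM by (simp add: multi_idx_def sum_atMost_split0)
    hence sk: "real k = real (\<beta> 0) + (\<Sum>i=1..n. real (\<beta> i))" by simp
    have xgS: "xg \<in> std_simplex n"
    proof -
      have "(\<Sum>i=1..n. xg i) = (\<Sum>i=1..n. real (\<beta> i)) / real k"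
        by (simp add: xg_def sum_divide_distrib)
      also have "\<dots> \<le> 1" using sk kpos by (simp add: divide_le_eq)
      finally show ?thesis unfolding std_simplex_def by (auto simp: xg_def)
    qed
    have bxg: "bary n xg i = real (\<beta> i) / real k" if "i \<le> n" for i
    proof (cases "i = 0")
      case True
      have "(\<Sum>j=1..n. xg j) = (\<Sum>j=1..n. real (\<beta> j)) / real k"
        by (simp add: xg_def sum_divide_distrib)
      thus ?thesis using True sk kpos by (simp add: bary_def field_simps)
    next
      case False thus ?thesis using that by (simp add: bary_def xg_def)
    qed
    define u where "u = (\<lambda>\<alpha>. fact l * mterm n (\<lambda>i. real (\<beta> i)) \<alpha>)"
    define w where "w = (\<lambda>\<alpha>. fact l / (\<Prod>i\<le>n. fact (\<alpha> i)) * (\<Prod>i\<le>n. ff (\<beta> i) (\<alpha> i)))"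
    have pxg: "real k ^ l * peval n p xg = (\<Sum>\<alpha>\<in>multi_idx n l. b \<alpha> * u \<alpha>)"
    proof -
      have "peval n p xg = (\<Sum>\<alpha>\<in>multi_idx n l. b \<alpha> * bernstein n l \<alpha> xg)" using rep by simp
      also have "\<dots> = (\<Sum>\<alpha>\<in>multi_idx n l. b \<alpha> * u \<alpha> / real k ^ l)"
      proof (intro sum.cong refl)
        fix \<alpha> assume a: "\<alpha> \<in> multi_idx n l"
        have "mterm n (bary n xg) \<alpha> = mterm n (\<lambda>i. real (\<beta> i) / real k) \<alpha>"
          unfolding mterm_def by (intro prod.cong) (auto simp: bxg)
        also have "\<dots> = mterm n (\<lambda>i. real (\<beta> i)) \<alpha> / real k ^ l" by (rule mterm_scale[OF a])
        finally show "b \<alpha> * bernstein n l \<alpha> xg = b \<alpha> * u \<alpha> / real k ^ l"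
          by (simp add: bernstein_mterm u_def)
      qed
      finally show ?thesis using kpos by (simp add: sum_divide_distrib[symmetric])
    qed
    have usum: "(\<Sum>\<alpha>\<in>multi_idx n l. u \<alpha>) = real k ^ l"
    proof -
      have "(\<Sum>i\<le>n. real (\<beta> i)) = real k" using bM by (simp add: multi_idx_def flip: of_nat_sum)
      thus ?thesis by (simp add: u_def sum_distrib_left[symmetric] multinomial)
    qed
    have ffpos: "ff k l > 0" by (rule ff_pos[OF kl])
    have wsum: "(\<Sum>\<alpha>\<in>multi_idx n l. w \<alpha>) = ff k l"
    proof -
      have "(\<Sum>\<alpha>\<in>multi_idx n l. w \<alpha> / ff k l) = 1"
        using ecoef_sum[OF bM kl] bM by (simp add: ecoef_def w_def)
      thus ?thesis using ffpos by (simp add: sum_divide_distrib[symmetric])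
    qed
    have w_le: "w \<alpha> \<le> u \<alpha>" for \<alpha>
    proof -
      have "(\<Prod>i\<le>n. ff (\<beta> i) (\<alpha> i)) \<le> (\<Prod>i\<le>n. real (\<beta> i) ^ \<alpha> i)"
        by (intro prod_mono conjI ff_nonneg ff_le)
      hence "w \<alpha> \<le> fact l / (\<Prod>i\<le>n. fact (\<alpha> i)) * (\<Prod>i\<le>n. real (\<beta> i) ^ \<alpha> i)"
      proof -
        have "0 \<le> (\<Prod>i\<le>n. fact (\<alpha> i) :: real)" by (intro prod_nonneg) auto
        hence "0 \<le> fact l / (\<Prod>i\<le>n. fact (\<alpha> i) :: real)" by simp
        thus ?thesis unfolding w_def using \<open>(\<Prod>i\<le>n. ff (\<beta> i) (\<alpha> i)) \<le> _\<close> by (rule mult_left_mono[rotated])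
      qed
      also have "\<dots> = u \<alpha>" by (simp add: u_def mterm_def prod_dividef)
      finally show ?thesis .
    qed
    have d_eq: "bern_coeff n p k \<beta> = (\<Sum>\<alpha>\<in>multi_idx n l. b \<alpha> * w \<alpha>) / ff k l"
      using bM by (simp add: dk ecoef_def w_def sum_divide_distrib)
    have "(\<Sum>\<alpha>\<in>multi_idx n l. b \<alpha> * (u \<alpha> - w \<alpha>)) \<le> (\<Sum>\<alpha>\<in>multi_idx n l. M * (u \<alpha> - w \<alpha>))"
    proof (intro sum_mono mult_right_mono)
      fix \<alpha> assume "\<alpha> \<in> multi_idx n l"
      thus "b \<alpha> \<le> M" using Mge[of \<alpha>] by linarith
      show "0 \<le> u \<alpha> - w \<alpha>" using w_le[of \<alpha>] by simp
    qed
    also have "\<dots> = M * (real k ^ l - ff k l)"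
      by (simp add: sum_distrib_left[symmetric] sum_subtractf usum wsum)
    finally have s1: "(\<Sum>\<alpha>\<in>multi_idx n l. b \<alpha> * (u \<alpha> - w \<alpha>)) \<le> M * (real k ^ l - ff k l)" .
    have s2: "(\<Sum>\<alpha>\<in>multi_idx n l. b \<alpha> * w \<alpha>) = real k ^ l * peval n p xg - (\<Sum>\<alpha>\<in>multi_idx n l. b \<alpha> * (u \<alpha> - w \<alpha>))"
      by (simp add: pxg[symmetric] algebra_simps sum_subtractf)
    have s3: "real k ^ l * P \<le> real k ^ l * peval n p xg"
      using Ple[OF xgS] kpos by (intro mult_left_mono) auto
    have "real k * (M * (real k ^ l - ff k l)) = M * (real k * (real k ^ l - ff k l))" by simp
    also have "\<dots> \<le> M * (real k ^ l * c)" using ffi[OF kl] M0 by (intro mult_left_mono) (auto simp: c_def)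
    also have "\<dots> = real k ^ l * (c * M)" by simp
    also have "\<dots> < real k ^ l * (real k * P)" using cMP kpos by (intro mult_strict_left_mono) auto
    also have "\<dots> = real k * (real k ^ l * P)" by simp
    finally have "M * (real k ^ l - ff k l) < real k ^ l * P" using kpos by simp
    hence "(\<Sum>\<alpha>\<in>multi_idx n l. b \<alpha> * w \<alpha>) > 0" using s1 s2 s3 by linarith
    thus ?thesis using d_eq ffpos by simp
  qed
  have qpos: "bern_coeff n q k \<alpha> > 0" if "\<alpha> \<in> multi_idx n k" for \<alpha>
    using assms(4) kl that by blast
  show ?thesis
  proof
    show "\<forall>\<alpha>\<in>multi_idx n k. bern_coeff n p k \<alpha> / bern_coeff n q k \<alpha> \<ge> 0"
      using dpos qpos by (simp add: less_imp_le)
    show "\<forall>i\<le>n. bern_coeff n p k (vtx k i) / bern_coeff n q k (vtx k i) > 0"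
      using dpos qpos vtx_multi by simp
  qed
qed

end
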